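(* There exist two non-isomorphic clique complexes $K$ and $K'$ (with colored vertices) such that the Simplicial Weisfeiler–Leman (SWL) test cannot distinguish $K$ from $K'$, but there is a color-based filtration whose persistence diagrams for $K$ and $K'$ differ.
   Context: An abstract simplicial complex $K$ over a vertex set $V$ is a set of nonempty subsets of $V$ (simplices) closed under taking nonempty subsets; the clique complex of a graph has as simplices all cliques of the graph. Simplices carry colors (attributes). For a simplex $\sigma$, its boundary neighborhood is $\mathcal{B}(\sigma)=\{\tau\subset\sigma:\dim\tau=\dim\sigma-1\}$ and its upper-adjacency neighborhood is $\mathcal{N}_\uparrow(\sigma)=\{\sigma': \dim\sigma'=\dim\sigma,\ \exists\,\delta\in K \text{ with } \sigma\subset\delta,\ \sigma'\subset\delta,\ \dim\delta=\dim\sigma+1\}$. The Simplicial Weisfeiler–Leman test (Bodnar et al.) is the color-refinement procedure that iteratively updates the color of every simplex by hashing its current color together with the multiset of colors of its boundary neighbors and the multiset of (colors of) its upper-adjacent neighbors (including the color of the shared coface); two complexes are distinguished if at some iteration their multisets of simplex colors differ. A color-based filtration is a filtration $\emptyset=K_0\subset K_{\alpha_1}\subset\dots\subset K_{\alpha_n}=K$ induced by a filtering function $f$ applied to colors of simplices (e.g. vertex colors, with each simplex entering at the maximum value of $f$ over its vertices, or edge colors analogously); persistence diagrams record the (birth, death) pairs of homological features (connected components, cycles, etc.) along the filtration. *)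

theory Defs
  imports Complex_Main "HOL-Library.Multiset"
begin

text \<open>Vertices are natural numbers, vertex colours are natural numbers.
  A simplicial complex is a set of nonempty finite vertex sets.\<close>

definition clique_complex :: "nat set \<Rightarrow> (nat \<Rightarrow> nat \<Rightarrow> bool) \<Rightarrow> nat set set" where
  "clique_complex V E =
     {\<sigma>. \<sigma> \<noteq> {} \<and> finite \<sigma> \<and> \<sigma> \<subseteq> V \<and> (\<forall>x\<in>\<sigma>. \<forall>y\<in>\<sigma>. x \<noteq> y \<longrightarrow> E x y)}"

definition colored_iso :: "nat set set \<Rightarrow> (nat \<Rightarrow> nat) \<Rightarrow> nat set set \<Rightarrow> (nat \<Rightarrow> nat) \<Rightarrow> bool" where
  "colored_iso K c K' c' \<longleftrightarrow>
     (\<exists>h. bij_betw h (\<Union>K) (\<Union>K') \<and>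
          (\<forall>\<sigma>. \<sigma> \<subseteq> \<Union>K \<longrightarrow> (\<sigma> \<in> K \<longleftrightarrow> h ` \<sigma> \<in> K')) \<and>
          (\<forall>v\<in>\<Union>K. c' (h v) = c v))"

text \<open>Colours are represented without hashing, by the (injective) tree of
  information they encode.\<close>
datatype swlcol = Init "nat multiset" | Step swlcol "swlcol multiset" "(swlcol \<times> swlcol) multiset"

definition boundary_nbhd :: "nat set set \<Rightarrow> nat set \<Rightarrow> nat set set" where
  "boundary_nbhd K \<sigma> = {\<tau>\<in>K. \<tau> \<subseteq> \<sigma> \<and> Suc (card \<tau>) = card \<sigma>}"

definition upper_nbhd :: "nat set set \<Rightarrow> nat set \<Rightarrow> (nat set \<times> nat set) set" where
  "upper_nbhd K \<sigma> = {(\<sigma>', \<delta>). \<sigma>' \<in> K \<and> \<delta> \<in> K \<and> card \<sigma>' = card \<sigma> \<and>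
                        \<sigma> \<subseteq> \<delta> \<and> \<sigma>' \<subseteq> \<delta> \<and> card \<delta> = Suc (card \<sigma>)}"

primrec swl :: "nat set set \<Rightarrow> (nat \<Rightarrow> nat) \<Rightarrow> nat \<Rightarrow> nat set \<Rightarrow> swlcol" where
  "swl K c 0 \<sigma> = Init (image_mset c (mset_set \<sigma>))"
| "swl K c (Suc t) \<sigma> =
     Step (swl K c t \<sigma>)
          (image_mset (swl K c t) (mset_set (boundary_nbhd K \<sigma>)))
          (image_mset (\<lambda>(\<sigma>', \<delta>). (swl K c t \<sigma>', swl K c t \<delta>)) (mset_set (upper_nbhd K \<sigma>)))"

definition swl_distinguishes :: "nat set set \<Rightarrow> (nat \<Rightarrow> nat) \<Rightarrow> nat set set \<Rightarrow> (nat \<Rightarrow> nat) \<Rightarrow> bool" where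
  "swl_distinguishes K c K' c' \<longleftrightarrow>
     (\<exists>t. image_mset (swl K c t) (mset_set K) \<noteq> image_mset (swl K' c' t) (mset_set K'))"

text \<open>p-chains over GF(2) of a complex L: sets of p-simplices (simplices with p+1 vertices).\<close>
definition chains :: "nat set set \<Rightarrow> nat \<Rightarrow> nat set set set" where
  "chains L p = Pow {\<sigma>\<in>L. card \<sigma> = Suc p}"

definition bd :: "nat set set \<Rightarrow> nat set set" where
  "bd S = {\<tau>. \<tau> \<noteq> {} \<and> odd (card {\<sigma>\<in>S. \<tau> \<subseteq> \<sigma> \<and> card \<sigma> = Suc (card \<tau>)})}"

definition cycles :: "nat set set \<Rightarrow> nat \<Rightarrow> nat set set set" where
  "cycles L p = {S\<in>chains L p. bd S = {}}"

definition boundaries :: "nat set set \<Rightarrow> nat \<Rightarrow> nat set set set" where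
  "boundaries L p = bd ` chains L (Suc p)"

text \<open>Persistent Betti number: GF(2)-dimension of the image of H_p(L1) in H_p(L2)
  (for L1 a subcomplex of L2), i.e. of Z_p(L1) / (Z_p(L1) \<inter> B_p(L2));
  the dimension of a finite GF(2)-vector space is log2 of its cardinality.\<close>
definition pbetti :: "nat set set \<Rightarrow> nat set set \<Rightarrow> nat \<Rightarrow> real" where
  "pbetti L1 L2 p =
     log 2 (real (card (cycles L1 p)) / real (card (cycles L1 p \<inter> boundaries L2 p)))"

definition filt :: "(nat \<Rightarrow> nat) \<Rightarrow> (nat \<Rightarrow> real) \<Rightarrow> nat set \<Rightarrow> real" where
  "filt c f \<sigma> = Max ((\<lambda>v. f (c v)) ` \<sigma>)"

definition sub_le :: "nat set set \<Rightarrow> (nat \<Rightarrow> nat) \<Rightarrow> (nat \<Rightarrow> real) \<Rightarrow> real \<Rightarrow> nat set set" where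
  "sub_le K c f a = {\<sigma>\<in>K. filt c f \<sigma> \<le> a}"

definition sub_lt :: "nat set set \<Rightarrow> (nat \<Rightarrow> nat) \<Rightarrow> (nat \<Rightarrow> real) \<Rightarrow> real \<Rightarrow> nat set set" where
  "sub_lt K c f a = {\<sigma>\<in>K. filt c f \<sigma> < a}"

text \<open>Persistence diagrams, as multiplicity functions: in homological degree p,
  the multiplicity of the point (b, d) (d = None meaning death at infinity),
  via the standard inclusion-exclusion of persistent Betti numbers.\<close>
fun persistence_diagrams ::
  "nat set set \<Rightarrow> (nat \<Rightarrow> nat) \<Rightarrow> (nat \<Rightarrow> real) \<Rightarrow> nat \<Rightarrow> real \<times> real option \<Rightarrow> real" where
  "persistence_diagrams K c f p (b, Some d) =
     (if b < d then
        pbetti (sub_le K c f b) (sub_lt K c f d) p - pbetti (sub_le K c f b) (sub_le K c f d) p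
      - pbetti (sub_lt K c f b) (sub_lt K c f d) p + pbetti (sub_lt K c f b) (sub_le K c f d) p
      else 0)"
| "persistence_diagrams K c f p (b, None) =
     pbetti (sub_le K c f b) K p - pbetti (sub_lt K c f b) K p"

end

theory Submission imports Defs begin

definition KK :: "nat set \<Rightarrow> nat set set \<Rightarrow> nat set set" where
  "KK V Ed = (\<lambda>v. {v}) ` V \<union> Ed"

definition Nb :: "nat set set \<Rightarrow> nat \<Rightarrow> nat set" where
  "Nb Ed v = {u. {v,u} \<in> Ed}"

definition good :: "nat set \<Rightarrow> nat set set \<Rightarrow> bool" where
  "good V Ed \<longleftrightarrow> finite V \<and> (\<forall>e\<in>Ed. \<exists>x y. x \<noteq> y \<and> x \<in> V \<and> y \<in> V \<and> e = {x,y}) \<and>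
     (\<forall>x y z. {x,y} \<in> Ed \<longrightarrow> {y,z} \<in> Ed \<longrightarrow> {x,z} \<in> Ed \<longrightarrow> x \<noteq> y \<longrightarrow> y \<noteq> z \<longrightarrow> x \<noteq> z \<longrightarrow> False) \<and>
     (\<forall>v\<in>V. card (Nb Ed v) = 2)"

lemma cc_eq:
  assumes "good V Ed"
  shows "clique_complex V (\<lambda>x y. {x,y} \<in> Ed) = KK V Ed"
proof
  show "clique_complex V (\<lambda>x y. {x,y} \<in> Ed) \<subseteq> KK V Ed"
  proof
    fix \<sigma> assume s: "\<sigma> \<in> clique_complex V (\<lambda>x y. {x,y} \<in> Ed)"
    hence ne: "\<sigma> \<noteq> {}" and sub: "\<sigma> \<subseteq> V" and cl: "\<forall>x\<in>\<sigma>. \<forall>y\<in>\<sigma>. x \<noteq> y \<longrightarrow> {x,y} \<in> Ed"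
      unfolding clique_complex_def by auto
    obtain x where x: "x \<in> \<sigma>" using ne by auto
    show "\<sigma> \<in> KK V Ed"
    proof (cases "\<sigma> = {x}")
      case True then show ?thesis using x sub unfolding KK_def by auto
    next
      case False
      then obtain y where y: "y \<in> \<sigma>" "y \<noteq> x" using x by auto
      have "\<sigma> = {x,y}"
      proof (rule ccontr)
        assume "\<sigma> \<noteq> {x,y}"
        then obtain z where z: "z \<in> \<sigma>" "z \<noteq> x" "z \<noteq> y" using x y by auto
        have "{x,y} \<in> Ed" "{y,z} \<in> Ed" "{x,z} \<in> Ed" using cl x y z by auto
        then show False using assms y z unfolding good_def by blast
      qed
      then show ?thesis using cl x y unfolding KK_def by auto
    qed
  qed
next
  show "KK V Ed \<subseteq> clique_complex V (\<lambda>x y. {x,y} \<in> Ed)"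
  proof
    fix \<sigma> assume "\<sigma> \<in> KK V Ed"
    then consider v where "v \<in> V" "\<sigma> = {v}" | "\<sigma> \<in> Ed" unfolding KK_def by auto
    then show "\<sigma> \<in> clique_complex V (\<lambda>x y. {x,y} \<in> Ed)"
    proof cases
      case 1 then show ?thesis unfolding clique_complex_def by auto
    next
      case 2
      then obtain x y where "x \<noteq> y" "x \<in> V" "y \<in> V" "\<sigma> = {x,y}" using assms unfolding good_def by blast
      then show ?thesis using 2 unfolding clique_complex_def by (auto simp: insert_commute)
    qed
  qed
qed

lemma KK_card:
  assumes "good V Ed" "\<sigma> \<in> KK V Ed"
  shows "(card \<sigma> = 1 \<and> (\<exists>v\<in>V. \<sigma> = {v})) \<or> (card \<sigma> = 2 \<and> \<sigma> \<in> Ed \<and> (\<exists>x y. x \<noteq> y \<and> x \<in> V \<and> y \<in> V \<and> \<sigma> = {x,y}))"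
  using assms unfolding KK_def good_def by auto

lemma KK_finite: "good V Ed \<Longrightarrow> \<sigma> \<in> KK V Ed \<Longrightarrow> finite \<sigma>"
  using KK_card by (metis card.infinite zero_neq_numeral zero_neq_one)

lemma Ed_card: "good V Ed \<Longrightarrow> e \<in> Ed \<Longrightarrow> card e = 2"
  unfolding good_def by auto

lemma bnd_vertex:
  assumes "good V Ed" shows "boundary_nbhd (KK V Ed) {v} = {}"
  using KK_card[OF assms] unfolding boundary_nbhd_def by fastforce

lemma bnd_edge:
  assumes "good V Ed" "x \<noteq> y" "x \<in> V" "y \<in> V"
  shows "boundary_nbhd (KK V Ed) {x,y} = {{x},{y}}"
proof -
  have "{{x},{y}} \<subseteq> boundary_nbhd (KK V Ed) {x,y}"
    using assms unfolding boundary_nbhd_def KK_def by auto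
  moreover have "boundary_nbhd (KK V Ed) {x,y} \<subseteq> {{x},{y}}"
  proof
    fix \<tau> assume t: "\<tau> \<in> boundary_nbhd (KK V Ed) {x,y}"
    hence "\<tau> \<in> KK V Ed" "\<tau> \<subseteq> {x,y}" "Suc (card \<tau>) = 2"
      using assms unfolding boundary_nbhd_def by auto
    then obtain w where "\<tau> = {w}" by (metis One_nat_def card_1_singletonE diff_Suc_1 numeral_2_eq_2)
    then show "\<tau> \<in> {{x},{y}}" using \<open>\<tau> \<subseteq> {x,y}\<close> by auto
  qed
  ultimately show ?thesis by blast
qed

lemma up_edge:
  assumes "good V Ed" "e \<in> Ed"
  shows "upper_nbhd (KK V Ed) e = {}"
  using KK_card[OF assms(1)] Ed_card[OF assms] unfolding upper_nbhd_def by fastforce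

lemma up_vertex:
  assumes g: "good V Ed" and v: "v \<in> V"
  shows "card (upper_nbhd (KK V Ed) {v}) = 4"
proof -
  let ?N = "Nb Ed v"
  have cN: "card ?N = 2" using g v unfolding good_def by auto
  have vN: "v \<notin> ?N" using Ed_card[OF g, of "{v,v}"] unfolding Nb_def by auto
  have NV: "?N \<subseteq> V" using g unfolding good_def Nb_def by (fastforce simp: doubleton_eq_iff)
  have fN: "finite ?N" using cN by (metis card.infinite zero_neq_numeral)
  have eq: "upper_nbhd (KK V Ed) {v} = (\<lambda>u. ({v},{v,u})) ` ?N \<union> (\<lambda>u. ({u},{v,u})) ` ?N"
  proof
    show "upper_nbhd (KK V Ed) {v} \<subseteq> (\<lambda>u. ({v},{v,u})) ` ?N \<union> (\<lambda>u. ({u},{v,u})) ` ?N"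
    proof
      fix p assume p: "p \<in> upper_nbhd (KK V Ed) {v}"
      obtain s d where pd: "p = (s,d)" by force
      have h: "s \<in> KK V Ed" "d \<in> KK V Ed" "card s = 1" "v \<in> d" "s \<subseteq> d" "card d = 2"
        using p pd unfolding upper_nbhd_def by auto
      obtain x y where xy: "x \<noteq> y" "d = {x,y}" "d \<in> Ed" using KK_card[OF g h(2)] h(6) by auto
      obtain w where w: "s = {w}" using KK_card[OF g h(1)] h(3) by auto
      obtain u where u: "d = {v,u}" "u \<noteq> v" using xy h(4) by auto
      have uN: "u \<in> ?N" using u xy unfolding Nb_def by auto
      have "w = v \<or> w = u" using w h(5) u by auto
      then show "p \<in> (\<lambda>u. ({v},{v,u})) ` ?N \<union> (\<lambda>u. ({u},{v,u})) ` ?N"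
        using pd w u uN by auto
    qed
  next
    show "(\<lambda>u. ({v},{v,u})) ` ?N \<union> (\<lambda>u. ({u},{v,u})) ` ?N \<subseteq> upper_nbhd (KK V Ed) {v}"
    proof
      fix p assume "p \<in> (\<lambda>u. ({v},{v,u})) ` ?N \<union> (\<lambda>u. ({u},{v,u})) ` ?N"
      then obtain u where u: "u \<in> ?N" "p = ({v},{v,u}) \<or> p = ({u},{v,u})" by auto
      have uv: "u \<noteq> v" using u vN by auto
      have "{v,u} \<in> Ed" using u unfolding Nb_def by auto
      moreover have "u \<in> V" using u NV by auto
      ultimately show "p \<in> upper_nbhd (KK V Ed) {v}"
        using u uv v unfolding upper_nbhd_def KK_def by auto
    qed
  qed
  have i1: "inj_on (\<lambda>u. ({v},{v,u})) ?N" using vN by (auto simp: inj_on_def doubleton_eq_iff)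
  have i2: "inj_on (\<lambda>u. ({u},{v,u})) ?N" by (auto simp: inj_on_def)
  have dj: "(\<lambda>u. ({v},{v,u})) ` ?N \<inter> (\<lambda>u. ({u},{v,u})) ` ?N = {}" using vN by auto
  show ?thesis unfolding eq
    by (subst card_Un_disjoint) (use fN dj card_image[OF i1] card_image[OF i2] cN in auto)
qed


primrec XY :: "nat \<Rightarrow> swlcol \<times> swlcol" where
  "XY 0 = (Init {#0#}, Init {#0,0#})"
| "XY (Suc t) = (Step (fst (XY t)) {#} (replicate_mset 4 (fst (XY t), snd (XY t))),
                 Step (snd (XY t)) (replicate_mset 2 (fst (XY t))) {#})"

lemma img_const: "image_mset (\<lambda>_. k) (mset_set A) = replicate_mset (card A) k"
  by (simp add: image_mset_const_eq)

lemma swl_XY: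
  assumes g: "good V Ed"
  shows "\<forall>\<sigma>\<in>KK V Ed. swl (KK V Ed) (\<lambda>_. 0) t \<sigma> = (if card \<sigma> = 1 then fst (XY t) else snd (XY t))"
proof (induction t)
  case 0
  show ?case
  proof
    fix \<sigma> assume s: "\<sigma> \<in> KK V Ed"
    have "image_mset (\<lambda>_. 0::nat) (mset_set \<sigma>) = replicate_mset (card \<sigma>) 0" by (rule img_const)
    then show "swl (KK V Ed) (\<lambda>_. 0) 0 \<sigma> = (if card \<sigma> = 1 then fst (XY 0) else snd (XY 0))"
      using KK_card[OF g s] by (auto simp: numeral_2_eq_2)
  qed
next
  case (Suc t)
  let ?K = "KK V Ed"
  let ?x = "fst (XY t)" let ?y = "snd (XY t)"
  show ?case
  proof
    fix \<sigma> assume s: "\<sigma> \<in> ?K"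
    from KK_card[OF g s] show "swl ?K (\<lambda>_. 0) (Suc t) \<sigma> = (if card \<sigma> = 1 then fst (XY (Suc t)) else snd (XY (Suc t)))"
    proof
      assume "card \<sigma> = 1 \<and> (\<exists>v\<in>V. \<sigma> = {v})"
      then obtain v where v: "v \<in> V" "\<sigma> = {v}" and c1: "card \<sigma> = 1" by auto
      have "image_mset (\<lambda>(\<sigma>', \<delta>). (swl ?K (\<lambda>_. 0) t \<sigma>', swl ?K (\<lambda>_. 0) t \<delta>)) (mset_set (upper_nbhd ?K \<sigma>))
            = image_mset (\<lambda>_. (?x, ?y)) (mset_set (upper_nbhd ?K \<sigma>))"
      proof (rule image_mset_cong)
        fix p assume "p \<in># mset_set (upper_nbhd ?K \<sigma>)"
        hence p: "p \<in> upper_nbhd ?K \<sigma>" by (metis elem_mset_set empty_iff mset_set.infinite set_mset_empty)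
        obtain a b where ab: "p = (a,b)" by force
        have "a \<in> ?K" "b \<in> ?K" "card a = 1" "card b = 2" using p ab c1 unfolding upper_nbhd_def by auto
        then show "(\<lambda>(\<sigma>', \<delta>). (swl ?K (\<lambda>_. 0) t \<sigma>', swl ?K (\<lambda>_. 0) t \<delta>)) p = (?x, ?y)"
          using Suc ab by auto
      qed
      moreover have "swl ?K (\<lambda>_. 0) t \<sigma> = ?x" using Suc s c1 by auto
      moreover have "boundary_nbhd ?K \<sigma> = {}" using v bnd_vertex[OF g] by simp
      moreover have "card (upper_nbhd ?K \<sigma>) = 4" using v up_vertex[OF g v(1)] by simp
      ultimately show ?thesis using c1
        by (simp only: swl.simps img_const XY.simps fst_conv mset_set.empty image_mset_empty if_True refl)
    next
      assume "card \<sigma> = 2 \<and> \<sigma> \<in> Ed \<and> (\<exists>x y. x \<noteq> y \<and> x \<in> V \<and> y \<in> V \<and> \<sigma> = {x,y})"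
      then obtain a b where ab: "a \<noteq> b" "a \<in> V" "b \<in> V" "\<sigma> = {a,b}" and c2: "card \<sigma> = 2" "\<sigma> \<in> Ed" by auto
      have "image_mset (swl ?K (\<lambda>_. 0) t) (mset_set (boundary_nbhd ?K \<sigma>))
            = image_mset (\<lambda>_. ?x) (mset_set (boundary_nbhd ?K \<sigma>))"
      proof (rule image_mset_cong)
        fix p assume "p \<in># mset_set (boundary_nbhd ?K \<sigma>)"
        hence p: "p \<in> boundary_nbhd ?K \<sigma>" by (metis elem_mset_set empty_iff mset_set.infinite set_mset_empty)
        then have "p \<in> ?K" "card p = 1" using c2 unfolding boundary_nbhd_def by auto
        then show "swl ?K (\<lambda>_. 0) t p = ?x" using Suc by auto
      qed
      moreover have "card (boundary_nbhd ?K \<sigma>) = 2" using bnd_edge[OF g ab(1-3)] ab by simp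
      moreover have "swl ?K (\<lambda>_. 0) t \<sigma> = ?y" using Suc s c2 by auto
      moreover have "upper_nbhd ?K \<sigma> = {}" using up_edge[OF g c2(2)] by simp
      moreover have ne: "(card \<sigma> = 1) = False" using c2 by simp
      ultimately show ?thesis
        by (simp only: swl.simps img_const XY.simps snd_conv mset_set.empty image_mset_empty if_False refl)
    qed
  qed
qed

lemma KK_union: assumes g: "good V Ed" shows "\<Union>(KK V Ed) = V"
proof
  show "\<Union>(KK V Ed) \<subseteq> V"
  proof
    fix x assume "x \<in> \<Union>(KK V Ed)"
    then obtain s where "s \<in> KK V Ed" "x \<in> s" by auto
    then show "x \<in> V" using KK_card[OF g] by fastforce
  qed
  show "V \<subseteq> \<Union>(KK V Ed)" unfolding KK_def by auto
qed

lemma swl_mset: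
  assumes g: "good V Ed" and fE: "finite Ed"
  shows "image_mset (swl (KK V Ed) (\<lambda>_. 0) t) (mset_set (KK V Ed))
       = replicate_mset (card V) (fst (XY t)) + replicate_mset (card Ed) (snd (XY t))"
proof -
  have fV: "finite V" using g unfolding good_def by auto
  have dj: "(\<lambda>v. {v}) ` V \<inter> Ed = {}" using Ed_card[OF g] by fastforce
  have IH: "\<And>\<sigma>. \<sigma> \<in> KK V Ed \<Longrightarrow> swl (KK V Ed) (\<lambda>_. 0) t \<sigma> = (if card \<sigma> = 1 then fst (XY t) else snd (XY t))"
    using swl_XY[OF g, of t] by blast
  have "mset_set (KK V Ed) = mset_set ((\<lambda>v. {v}) ` V) + mset_set Ed"
    unfolding KK_def using fV fE dj by (simp add: mset_set_Union)
  moreover have "image_mset (swl (KK V Ed) (\<lambda>_. 0) t) (mset_set ((\<lambda>v. {v}) ` V)) = replicate_mset (card V) (fst (XY t))"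
  proof -
    have "image_mset (swl (KK V Ed) (\<lambda>_. 0) t) (mset_set ((\<lambda>v. {v}) ` V)) = image_mset (\<lambda>_. fst (XY t)) (mset_set ((\<lambda>v. {v}) ` V))"
    proof (rule image_mset_cong)
      fix x assume "x \<in># mset_set ((\<lambda>v. {v}) ` V)"
      then obtain v where "x = {v}" "v \<in> V" using fV by auto
      moreover then have "x \<in> KK V Ed" unfolding KK_def by blast
      ultimately show "swl (KK V Ed) (\<lambda>_. 0) t x = fst (XY t)" using IH by simp
    qed
    also have "\<dots> = replicate_mset (card V) (fst (XY t))"
      by (simp add: img_const card_image)
    finally show ?thesis .
  qed
  moreover have "image_mset (swl (KK V Ed) (\<lambda>_. 0) t) (mset_set Ed) = replicate_mset (card Ed) (snd (XY t))"
  proof -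
    have "image_mset (swl (KK V Ed) (\<lambda>_. 0) t) (mset_set Ed) = image_mset (\<lambda>_. snd (XY t)) (mset_set Ed)"
    proof (rule image_mset_cong)
      fix x assume "x \<in># mset_set Ed"
      then have x: "x \<in> Ed" using fE by simp
      then have "x \<in> KK V Ed" unfolding KK_def by blast
      moreover have "card x = 2" using Ed_card[OF g x] .
      ultimately show "swl (KK V Ed) (\<lambda>_. 0) t x = snd (XY t)" using IH by simp
    qed
    also have "\<dots> = replicate_mset (card Ed) (snd (XY t))"
      by (simp add: img_const)
    finally show ?thesis .
  qed
  ultimately show ?thesis by simp
qed


lemma bd_empty: "bd {} = {}" unfolding bd_def by simp

lemma KK_ne: "good V Ed \<Longrightarrow> \<sigma> \<in> KK V Ed \<Longrightarrow> \<sigma> \<noteq> {}"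
  using KK_card by fastforce

lemma chains1: assumes g: "good V Ed" shows "chains (KK V Ed) 1 = Pow Ed"
proof -
  have "{\<sigma>\<in>KK V Ed. card \<sigma> = Suc 1} = Ed"
    using KK_card[OF g] Ed_card[OF g] unfolding KK_def by fastforce
  then show ?thesis unfolding chains_def by simp
qed

lemma bnds1: assumes g: "good V Ed" shows "boundaries (KK V Ed) 1 = {{}}"
proof -
  have "{\<sigma>\<in>KK V Ed. card \<sigma> = Suc (Suc 1)} = {}"
    using KK_card[OF g] by fastforce
  then show ?thesis unfolding boundaries_def chains_def by (simp only: Pow_empty image_insert image_empty bd_empty Suc_1 numeral_3_eq_3 eval_nat_numeral)
qed

lemma bd_edges:
  assumes g: "good V Ed" and S: "S \<subseteq> Ed"
  shows "(bd S = {}) \<longleftrightarrow> (\<forall>v. even (card {\<sigma>\<in>S. v \<in> \<sigma>}))"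
proof
  assume b: "bd S = {}"
  show "\<forall>v. even (card {\<sigma>\<in>S. v \<in> \<sigma>})"
  proof
    fix v
    have "{v} \<notin> bd S" using b by simp
    then have "even (card {\<sigma>\<in>S. {v} \<subseteq> \<sigma> \<and> card \<sigma> = Suc (card {v})})" unfolding bd_def by simp
    moreover have "{\<sigma>\<in>S. {v} \<subseteq> \<sigma> \<and> card \<sigma> = Suc (card {v})} = {\<sigma>\<in>S. v \<in> \<sigma>}"
      using S Ed_card[OF g] by auto
    ultimately show "even (card {\<sigma>\<in>S. v \<in> \<sigma>})" by simp
  qed
next
  assume ev: "\<forall>v. even (card {\<sigma>\<in>S. v \<in> \<sigma>})"
  show "bd S = {}"
  proof (rule ccontr)
    assume "bd S \<noteq> {}"
    then obtain \<tau> where t: "\<tau> \<noteq> {}" "odd (card {\<sigma>\<in>S. \<tau> \<subseteq> \<sigma> \<and> card \<sigma> = Suc (card \<tau>)})"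
      unfolding bd_def by auto
    then have "{\<sigma>\<in>S. \<tau> \<subseteq> \<sigma> \<and> card \<sigma> = Suc (card \<tau>)} \<noteq> {}" by (metis card.empty even_zero)
    then obtain \<sigma> where s: "\<sigma> \<in> S" "\<tau> \<subseteq> \<sigma>" "card \<sigma> = Suc (card \<tau>)" by auto
    have "card \<sigma> = 2" using s S Ed_card[OF g] by auto
    then have "card \<tau> = 1" using s by simp
    then obtain v where v: "\<tau> = {v}" using card_1_singletonE by blast
    have "{\<sigma>\<in>S. \<tau> \<subseteq> \<sigma> \<and> card \<sigma> = Suc (card \<tau>)} = {\<sigma>\<in>S. v \<in> \<sigma>}"
      using S Ed_card[OF g] v by auto
    then show False using t ev by simp
  qed
qed

lemma cycles1:
  assumes g: "good V Ed"
  shows "cycles (KK V Ed) 1 = {S. S \<subseteq> Ed \<and> (\<forall>v. even (card {\<sigma>\<in>S. v \<in> \<sigma>}))}"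
  unfolding cycles_def chains1[OF g] using bd_edges[OF g] by auto

lemma filt0: "finite \<sigma> \<Longrightarrow> \<sigma> \<noteq> {} \<Longrightarrow> filt c (\<lambda>_. 0) \<sigma> = 0"
  unfolding filt_def by (simp add: image_constant_conv)

lemma pd_val:
  assumes g: "good V Ed"
  shows "persistence_diagrams (KK V Ed) (\<lambda>_. 0) (\<lambda>_. 0) 1 (0, None) = log 2 (card (cycles (KK V Ed) 1))"
proof -
  let ?K = "KK V Ed"
  have le: "sub_le ?K (\<lambda>_. 0) (\<lambda>_. 0) 0 = ?K"
    unfolding sub_le_def using filt0 KK_finite[OF g] KK_ne[OF g] by auto
  have lt: "sub_lt ?K (\<lambda>_. 0) (\<lambda>_. 0) 0 = {}"
    unfolding sub_lt_def using filt0 KK_finite[OF g] KK_ne[OF g] by auto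
  have c0: "cycles {} 1 = {{}}" unfolding cycles_def chains_def by (auto simp: bd_empty)
  have e: "{} \<in> cycles ?K 1" unfolding cycles1[OF g] by simp
  have "cycles ?K 1 \<inter> boundaries ?K 1 = {{}}" using e bnds1[OF g] by auto
  then have p1: "pbetti ?K ?K 1 = log 2 (card (cycles ?K 1))" unfolding pbetti_def by simp
  have p2: "pbetti {} ?K 1 = 0" unfolding pbetti_def c0 bnds1[OF g] by simp
  show ?thesis using le lt p1 p2 by simp
qed



definition V8 :: "nat set" where "V8 = {0..<8}"
definition Ed1 :: "nat set set" where
  "Ed1 = {{0,1},{1,2},{2,3},{0,3},{4,5},{5,6},{6,7},{4,7}}"
definition Ed2 :: "nat set set" where
  "Ed2 = {{0,1},{1,2},{2,3},{3,4},{4,5},{5,6},{6,7},{0,7}}"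

lemma V8_eq: "V8 = {0,1,2,3,4,5,6,7}" unfolding V8_def by auto

lemma mem2: "{x,y} \<in> Ed2 \<Longrightarrow> x < 8 \<and> y < 8 \<and> (y = x+1 \<or> x = y+1 \<or> (x=0\<and>y=7) \<or> (x=7\<and>y=0))"
  unfolding Ed2_def by (auto simp: doubleton_eq_iff)
lemma mem1: "{x,y} \<in> Ed1 \<Longrightarrow> x < 8 \<and> y < 8 \<and> ((y = x+1 \<and> x \<noteq> 3) \<or> (x = y+1 \<and> y \<noteq> 3) \<or> (x=0\<and>y=3) \<or> (x=3\<and>y=0) \<or> (x=4\<and>y=7) \<or> (x=7\<and>y=4))"
  unfolding Ed1_def by (auto simp: doubleton_eq_iff)
lemma cE1: "card Ed1 = 8" unfolding Ed1_def by (simp add: doubleton_eq_iff)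
lemma cE2: "card Ed2 = 8" unfolding Ed2_def by (simp add: doubleton_eq_iff)
lemma cV: "card V8 = 8" unfolding V8_def by simp

lemma tri1: "{x,y} \<in> Ed1 \<Longrightarrow> {y,z} \<in> Ed1 \<Longrightarrow> {x,z} \<in> Ed1 \<Longrightarrow> x \<noteq> y \<Longrightarrow> y \<noteq> z \<Longrightarrow> x \<noteq> z \<Longrightarrow> False"
  apply (drule mem1)+ by arith
lemma tri2: "{x,y} \<in> Ed2 \<Longrightarrow> {y,z} \<in> Ed2 \<Longrightarrow> {x,z} \<in> Ed2 \<Longrightarrow> x \<noteq> y \<Longrightarrow> y \<noteq> z \<Longrightarrow> x \<noteq> z \<Longrightarrow> False"
  apply (drule mem2)+ by arith
lemma no4: "{a,b} \<in> Ed2 \<Longrightarrow> {b,c} \<in> Ed2 \<Longrightarrow> {c,d} \<in> Ed2 \<Longrightarrow> {a,d} \<in> Ed2 \<Longrightarrow> a \<noteq> c \<Longrightarrow> b \<noteq> d \<Longrightarrow> False"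
  apply (drule mem2)+ by arith
lemma nb1_0: "Nb Ed1 0 = {1,3}" unfolding Nb_def Ed1_def by (auto simp: doubleton_eq_iff)
lemma nb1_1: "Nb Ed1 1 = {0,2}" unfolding Nb_def Ed1_def by (auto simp: doubleton_eq_iff)
lemma nb1_2: "Nb Ed1 2 = {1,3}" unfolding Nb_def Ed1_def by (auto simp: doubleton_eq_iff)
lemma nb1_3: "Nb Ed1 3 = {0,2}" unfolding Nb_def Ed1_def by (auto simp: doubleton_eq_iff)
lemma nb1_4: "Nb Ed1 4 = {5,7}" unfolding Nb_def Ed1_def by (auto simp: doubleton_eq_iff)
lemma nb1_5: "Nb Ed1 5 = {4,6}" unfolding Nb_def Ed1_def by (auto simp: doubleton_eq_iff)
lemma nb1_6: "Nb Ed1 6 = {5,7}" unfolding Nb_def Ed1_def by (auto simp: doubleton_eq_iff)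
lemma nb1_7: "Nb Ed1 7 = {4,6}" unfolding Nb_def Ed1_def by (auto simp: doubleton_eq_iff)
lemma deg1: "\<forall>v\<in>V8. card (Nb Ed1 v) = 2"
  unfolding V8_eq by (simp add: nb1_0 nb1_1 nb1_1[simplified] nb1_2 nb1_3 nb1_4 nb1_5 nb1_6 nb1_7)
lemma edV1: "\<forall>e\<in>Ed1. card e = 2 \<and> e \<subseteq> V8" unfolding Ed1_def V8_def by simp
lemma nb2_0: "Nb Ed2 0 = {7,1}" unfolding Nb_def Ed2_def by (auto simp: doubleton_eq_iff)
lemma nb2_1: "Nb Ed2 1 = {0,2}" unfolding Nb_def Ed2_def by (auto simp: doubleton_eq_iff)
lemma nb2_2: "Nb Ed2 2 = {1,3}" unfolding Nb_def Ed2_def by (auto simp: doubleton_eq_iff)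
lemma nb2_3: "Nb Ed2 3 = {2,4}" unfolding Nb_def Ed2_def by (auto simp: doubleton_eq_iff)
lemma nb2_4: "Nb Ed2 4 = {3,5}" unfolding Nb_def Ed2_def by (auto simp: doubleton_eq_iff)
lemma nb2_5: "Nb Ed2 5 = {4,6}" unfolding Nb_def Ed2_def by (auto simp: doubleton_eq_iff)
lemma nb2_6: "Nb Ed2 6 = {5,7}" unfolding Nb_def Ed2_def by (auto simp: doubleton_eq_iff)
lemma nb2_7: "Nb Ed2 7 = {6,0}" unfolding Nb_def Ed2_def by (auto simp: doubleton_eq_iff)
lemma deg2: "\<forall>v\<in>V8. card (Nb Ed2 v) = 2"
  unfolding V8_eq by (simp add: nb2_0 nb2_1 nb2_1[simplified] nb2_2 nb2_3 nb2_4 nb2_5 nb2_6 nb2_7)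
lemma edV2: "\<forall>e\<in>Ed2. card e = 2 \<and> e \<subseteq> V8" unfolding Ed2_def V8_def by simp


lemma good_intro:
  assumes "finite V" "\<forall>e\<in>Ed. card e = 2 \<and> e \<subseteq> V"
    "\<And>x y z. {x,y} \<in> Ed \<Longrightarrow> {y,z} \<in> Ed \<Longrightarrow> {x,z} \<in> Ed \<Longrightarrow> x \<noteq> y \<Longrightarrow> y \<noteq> z \<Longrightarrow> x \<noteq> z \<Longrightarrow> False"
    "\<forall>v\<in>V. card (Nb Ed v) = 2"
  shows "good V Ed"
proof -
  have "\<forall>e\<in>Ed. \<exists>x y. x \<noteq> y \<and> x \<in> V \<and> y \<in> V \<and> e = {x,y}"
  proof
    fix e assume "e \<in> Ed"
    then have "card e = 2" "e \<subseteq> V" using assms(2) by auto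
    then show "\<exists>x y. x \<noteq> y \<and> x \<in> V \<and> y \<in> V \<and> e = {x,y}" by (auto simp: card_2_iff)
  qed
  then show ?thesis unfolding good_def using assms by blast
qed

lemma good1: "good V8 Ed1"
proof (rule good_intro)
  show "finite V8" by (simp add: V8_def)
  show "\<forall>e\<in>Ed1. card e = 2 \<and> e \<subseteq> V8" by (rule edV1)
  show "\<forall>v\<in>V8. card (Nb Ed1 v) = 2" by (rule deg1)
qed (rule tri1)
lemma good2: "good V8 Ed2"
proof (rule good_intro)
  show "finite V8" by (simp add: V8_def)
  show "\<forall>e\<in>Ed2. card e = 2 \<and> e \<subseteq> V8" by (rule edV2)
  show "\<forall>v\<in>V8. card (Nb Ed2 v) = 2" by (rule deg2)
qed (rule tri2)

lemma coll_insert: "{x \<in> insert a B. P x} = (if P a then insert a {x\<in>B. P x} else {x\<in>B. P x})"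
  by auto
lemma coll_empty: "{x \<in> {}. P x} = {}" by auto

definition A1 :: "nat set set" where "A1 = {{0,1},{1,2},{2,3},{0,3}}"
definition B1 :: "nat set set" where "B1 = {{4,5},{5,6},{6,7},{4,7}}"

lemma evA1: "even (card {\<sigma>\<in>A1. v \<in> \<sigma>})"
  unfolding A1_def coll_insert coll_empty by (auto simp: doubleton_eq_iff)
lemma evB1: "even (card {\<sigma>\<in>B1. v \<in> \<sigma>})"
  unfolding B1_def coll_insert coll_empty by (auto simp: doubleton_eq_iff)
lemma evE1: "even (card {\<sigma>\<in>Ed1. v \<in> \<sigma>})"
  unfolding Ed1_def coll_insert coll_empty by (auto simp: doubleton_eq_iff)



lemma fE1: "finite Ed1" unfolding Ed1_def by simp
lemma fE2: "finite Ed2" unfolding Ed2_def by simp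

lemma card_cyc1: "4 \<le> card (cycles (KK V8 Ed1) 1)"
proof -
  have sA: "A1 \<subseteq> Ed1" unfolding A1_def Ed1_def by simp
  have sB: "B1 \<subseteq> Ed1" unfolding B1_def Ed1_def by simp
  have sub: "{{}, A1, B1, Ed1} \<subseteq> cycles (KK V8 Ed1) 1"
    unfolding cycles1[OF good1] using evA1 evB1 evE1 sA sB by simp
  have fin: "finite (cycles (KK V8 Ed1) 1)"
    unfolding cycles1[OF good1] by (rule finite_subset[of _ "Pow Ed1"]) (auto simp: fE1)
  have d: "A1 \<noteq> {}" "B1 \<noteq> {}" "Ed1 \<noteq> {}" "A1 \<noteq> B1" "A1 \<noteq> Ed1" "B1 \<noteq> Ed1"
  proof -
    have m: "{0,1} \<in> A1" "{0,1} \<notin> B1" "{4,5} \<notin> A1" "{4,5} \<in> Ed1" "{0,1} \<in> Ed1" "{4,5} \<in> B1"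
      unfolding A1_def B1_def Ed1_def by (auto simp: doubleton_eq_iff)
    then show "A1 \<noteq> {}" "B1 \<noteq> {}" "Ed1 \<noteq> {}" "A1 \<noteq> B1" "A1 \<noteq> Ed1" "B1 \<noteq> Ed1" by auto
  qed
  have "card {{}, A1, B1, Ed1} = 4" using d by auto
  then show ?thesis using card_mono[OF fin sub] by simp
qed

lemma pairlem: "a \<noteq> b \<Longrightarrow> even (card ({a,b} \<inter> S)) \<Longrightarrow> (a \<in> S \<longleftrightarrow> b \<in> S)"
  by (cases "a \<in> S"; cases "b \<in> S") (auto simp: Int_insert_left)

lemma cyc2_sub: "cycles (KK V8 Ed2) 1 \<subseteq> {{}, Ed2}"
proof
  fix S assume "S \<in> cycles (KK V8 Ed2) 1"
  then have S: "S \<subseteq> Ed2" and ev: "\<And>v. even (card {\<sigma>\<in>S. v \<in> \<sigma>})" unfolding cycles1[OF good2] by auto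
  have loc: "{\<sigma>\<in>S. v \<in> \<sigma>} = {\<sigma>\<in>Ed2. v \<in> \<sigma>} \<inter> S" for v using S by auto
  have st: "\<And>v a b. {\<sigma>\<in>Ed2. v \<in> \<sigma>} = {a,b} \<Longrightarrow> a \<noteq> b \<Longrightarrow> (a \<in> S \<longleftrightarrow> b \<in> S)"
    using pairlem ev loc by metis
  have e1: "{\<sigma>\<in>Ed2. 1 \<in> \<sigma>} = {{0,1},{1,2}}" unfolding Ed2_def coll_insert coll_empty by auto
  have e2: "{\<sigma>\<in>Ed2. 2 \<in> \<sigma>} = {{1,2},{2,3}}" unfolding Ed2_def coll_insert coll_empty by auto
  have e3: "{\<sigma>\<in>Ed2. 3 \<in> \<sigma>} = {{2,3},{3,4}}" unfolding Ed2_def coll_insert coll_empty by auto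
  have e4: "{\<sigma>\<in>Ed2. 4 \<in> \<sigma>} = {{3,4},{4,5}}" unfolding Ed2_def coll_insert coll_empty by auto
  have e5: "{\<sigma>\<in>Ed2. 5 \<in> \<sigma>} = {{4,5},{5,6}}" unfolding Ed2_def coll_insert coll_empty by auto
  have e6: "{\<sigma>\<in>Ed2. 6 \<in> \<sigma>} = {{5,6},{6,7}}" unfolding Ed2_def coll_insert coll_empty by auto
  have e7: "{\<sigma>\<in>Ed2. 7 \<in> \<sigma>} = {{6,7},{0,7}}" unfolding Ed2_def coll_insert coll_empty by auto
  have i1: "({0,1} \<in> S) = ({1,2} \<in> S)" by (rule st[OF e1]) (auto simp: doubleton_eq_iff)
  have i2: "({1,2} \<in> S) = ({2,3} \<in> S)" by (rule st[OF e2]) (auto simp: doubleton_eq_iff)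
  have i3: "({2,3} \<in> S) = ({3,4} \<in> S)" by (rule st[OF e3]) (auto simp: doubleton_eq_iff)
  have i4: "({3,4} \<in> S) = ({4,5} \<in> S)" by (rule st[OF e4]) (auto simp: doubleton_eq_iff)
  have i5: "({4,5} \<in> S) = ({5,6} \<in> S)" by (rule st[OF e5]) (auto simp: doubleton_eq_iff)
  have i6: "({5,6} \<in> S) = ({6,7} \<in> S)" by (rule st[OF e6]) (auto simp: doubleton_eq_iff)
  have i7: "({6,7} \<in> S) = ({0,7} \<in> S)" by (rule st[OF e7]) (auto simp: doubleton_eq_iff)
  show "S \<in> {{}, Ed2}"
  proof (cases "{0,1} \<in> S")
    case True
    then have "Ed2 \<subseteq> S" using i1 i2 i3 i4 i5 i6 i7 unfolding Ed2_def by auto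
    then show ?thesis using S by auto
  next
    case False
    then have "\<forall>e\<in>Ed2. e \<notin> S" using i1 i2 i3 i4 i5 i6 i7 unfolding Ed2_def by auto
    then show ?thesis using S by auto
  qed
qed

lemma card_cyc2: "card (cycles (KK V8 Ed2) 1) \<le> 2" "1 \<le> card (cycles (KK V8 Ed2) 1)"
proof -
  have "card (cycles (KK V8 Ed2) 1) \<le> card {{}, Ed2}" by (rule card_mono[OF _ cyc2_sub]) simp
  also have "\<dots> \<le> 2" by (simp add: card_insert_le_m1)
  finally show "card (cycles (KK V8 Ed2) 1) \<le> 2" .
  have "{} \<in> cycles (KK V8 Ed2) 1" unfolding cycles1[OF good2] by simp
  moreover have "finite (cycles (KK V8 Ed2) 1)" by (rule finite_subset[OF cyc2_sub]) simp
  ultimately show "1 \<le> card (cycles (KK V8 Ed2) 1)" by (metis card_0_eq empty_iff less_one not_le)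
qed


lemma KK_pair: "x \<noteq> y \<Longrightarrow> {x,y} \<in> KK V Ed \<Longrightarrow> {x,y} \<in> Ed"
  unfolding KK_def by (auto simp: doubleton_eq_iff)

lemma noniso: "\<not> colored_iso (KK V8 Ed1) c (KK V8 Ed2) c'"
proof
  assume "colored_iso (KK V8 Ed1) c (KK V8 Ed2) c'"
  then obtain h where b0: "bij_betw h (\<Union>(KK V8 Ed1)) (\<Union>(KK V8 Ed2))"
    and pr0: "\<forall>\<sigma>. \<sigma> \<subseteq> \<Union>(KK V8 Ed1) \<longrightarrow> (\<sigma> \<in> KK V8 Ed1 \<longleftrightarrow> h ` \<sigma> \<in> KK V8 Ed2)"
    unfolding colored_iso_def by (elim exE conjE)
  have b: "bij_betw h V8 V8" using b0 unfolding KK_union[OF good1] KK_union[OF good2] .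
  have pr: "\<And>\<sigma>. \<sigma> \<subseteq> V8 \<Longrightarrow> \<sigma> \<in> KK V8 Ed1 \<Longrightarrow> h ` \<sigma> \<in> KK V8 Ed2"
    using pr0 unfolding KK_union[OF good1] by blast
  have inj: "inj_on h V8" using b bij_betw_def by blast
  have edge: "{h a, h b} \<in> Ed2" if "{a,b} \<in> Ed1" "a \<noteq> b" "a \<in> V8" "b \<in> V8" for a b
  proof -
    have "{a,b} \<in> KK V8 Ed1" using that(1) unfolding KK_def by (rule UnI2)
    moreover have "{a,b} \<subseteq> V8" using that by simp
    ultimately have "h ` {a,b} \<in> KK V8 Ed2" by (rule pr[rotated])
    then have "{h a, h b} \<in> KK V8 Ed2" by simp
    moreover have "h a \<noteq> h b" using inj_on_contraD[OF inj that(2-4)] .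
    ultimately show ?thesis using KK_pair by blast
  qed
  have V: "0 \<in> V8" "1 \<in> V8" "2 \<in> V8" "3 \<in> V8" unfolding V8_def by auto
  have "{h 0, h 1} \<in> Ed2" by (rule edge) (simp_all add: Ed1_def V8_def)
  moreover have "{h 1, h 2} \<in> Ed2" by (rule edge) (simp_all add: Ed1_def V8_def)
  moreover have "{h 2, h 3} \<in> Ed2" by (rule edge) (simp_all add: Ed1_def V8_def)
  moreover have "{h 0, h 3} \<in> Ed2" by (rule edge) (simp_all add: Ed1_def V8_def)
  moreover have "h 0 \<noteq> h 2" by (rule inj_on_contraD[OF inj _ V(1) V(3)]) simp
  moreover have "h 1 \<noteq> h 3" by (rule inj_on_contraD[OF inj _ V(2) V(4)]) simp
  ultimately show False by (rule no4)
qed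

theorem proposition1:
  shows "\<exists>V E c V' E' c'. finite V \<and> finite V' \<and>
           \<not> colored_iso (clique_complex V E) c (clique_complex V' E') c' \<and>
           \<not> swl_distinguishes (clique_complex V E) c (clique_complex V' E') c' \<and>
           (\<exists>f. persistence_diagrams (clique_complex V E) c f
                 \<noteq> persistence_diagrams (clique_complex V' E') c' f)"
proof (intro exI conjI)
  let ?E1 = "\<lambda>x y. {x,y} \<in> Ed1" and ?E2 = "\<lambda>x y. {x,y} \<in> Ed2"
  have k1: "clique_complex V8 ?E1 = KK V8 Ed1" by (rule cc_eq[OF good1])
  have k2: "clique_complex V8 ?E2 = KK V8 Ed2" by (rule cc_eq[OF good2])
  show "finite V8" "finite V8" by (simp_all add: V8_def)
  show "\<not> colored_iso (clique_complex V8 ?E1) (\<lambda>_. 0) (clique_complex V8 ?E2) (\<lambda>_. 0)"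
    unfolding k1 k2 by (rule noniso)
  show "\<not> swl_distinguishes (clique_complex V8 ?E1) (\<lambda>_. 0) (clique_complex V8 ?E2) (\<lambda>_. 0)"
  proof -
    have "\<And>t. image_mset (swl (KK V8 Ed1) (\<lambda>_. 0) t) (mset_set (KK V8 Ed1))
              = image_mset (swl (KK V8 Ed2) (\<lambda>_. 0) t) (mset_set (KK V8 Ed2))"
      unfolding swl_mset[OF good1 fE1] swl_mset[OF good2 fE2] cE1 cE2 by (rule refl)
    then show ?thesis unfolding k1 k2 swl_distinguishes_def by blast
  qed
  show "persistence_diagrams (clique_complex V8 ?E1) (\<lambda>_. 0) (\<lambda>_. 0)
          \<noteq> persistence_diagrams (clique_complex V8 ?E2) (\<lambda>_. 0) (\<lambda>_. 0)"
  proof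
    assume "persistence_diagrams (clique_complex V8 ?E1) (\<lambda>_. 0) (\<lambda>_. 0)
          = persistence_diagrams (clique_complex V8 ?E2) (\<lambda>_. 0) (\<lambda>_. 0)"
    then have "persistence_diagrams (KK V8 Ed1) (\<lambda>_. 0) (\<lambda>_. 0) 1 (0, None)
             = persistence_diagrams (KK V8 Ed2) (\<lambda>_. 0) (\<lambda>_. 0) 1 (0, None)"
      unfolding k1 k2 by simp
    then have eq: "log 2 (card (cycles (KK V8 Ed1) 1)) = log 2 (card (cycles (KK V8 Ed2) 1))"
      unfolding pd_val[OF good1] pd_val[OF good2] .
    have "log 2 (card (cycles (KK V8 Ed1) 1)) \<ge> log 2 4"
      using card_cyc1 by (subst log_le_cancel_iff) auto
    moreover have "log 2 (card (cycles (KK V8 Ed2) 1)) \<le> log 2 2"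
      using card_cyc2 by (subst log_le_cancel_iff) auto
    moreover have "log 2 (4::real) = 2"
    proof -
      have "log 2 ((2::real)^2) = real 2" using log_pow_cancel[of "2::real" 2] by simp
      then show ?thesis by simp
    qed
    moreover have "log 2 (2::real) = 1" by simp
    ultimately show False using eq by linarith
  qed
qed

end
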